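(* Let $N=\{1,\dots,n\}$, $\eta>0$, $B\ge1$ an integer. Let $(A(k))_{k\ge0}$ be $n\times n$ matrices, $x(0)\in\mathbb{R}^n$, and $x(k+1)=A(k)x(k)$. Assume: (i) each $A(k)$ is doubly stochastic with positive diagonal entries and all positive entries at least $\eta$; (ii) for every integer $k\ge0$, every permutation $\sigma$ of $N$ with $x_{\sigma(1)}(kB)\ge\cdots\ge x_{\sigma(n)}(kB)$, and every $d\in\{1,\dots,n-1\}$, either $x_{\sigma(d)}(kB)=x_{\sigma(d+1)}(kB)$, or there exist $t\in\{kB,\dots,(k+1)B-1\}$, $i\in\{\sigma(1),\dots,\sigma(d)\}$, $j\in\{\sigma(d+1),\dots,\sigma(n)\}$ with $(i,j)$ or $(j,i)$ in $\mathcal{E}(A(t))$. Then for every integer $k\ge0$ and every permutation $\sigma$ of $N$ with $x_{\sigma(1)}(kB)\ge\cdots\ge x_{\sigma(n)}(kB)$, \[V(x(kB))-V(x((k+1)B))\ge\frac\eta2\sum_{i=1}^{n-1}\big(x_{\sigma(i)}(kB)-x_{\sigma(i+1)}(kB)\big)^2.\]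
   Context: A matrix is doubly stochastic if it is nonnegative with all row and column sums equal to $1$. For a matrix $A=[a_{ij}]$, $\mathcal{E}(A)$ is the set of directed edges $(j,i)$ (including self-edges) with $a_{ij}>0$. For $x\in\mathbb{R}^n$, $\bar x=\frac1n\sum_ix_i$ and $V(x)=\sum_i(x_i-\bar x)^2$. *)

theory Defs
  imports Complex_Main "HOL-Combinatorics.Permutations"
begin

text \<open>Vectors in R^n are functions nat => real indexed by {1..n};
  n x n matrices are functions nat => nat => real, entry (i,j) is M i j.\<close>

definition doubly_stochastic :: "nat \<Rightarrow> (nat \<Rightarrow> nat \<Rightarrow> real) \<Rightarrow> bool" where
  "doubly_stochastic n M \<longleftrightarrow>
     (\<forall>i\<in>{1..n}. \<forall>j\<in>{1..n}. M i j \<ge> 0) \<and>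
     (\<forall>i\<in>{1..n}. (\<Sum>j=1..n. M i j) = 1) \<and>
     (\<forall>j\<in>{1..n}. (\<Sum>i=1..n. M i j) = 1)"

definition edges :: "nat \<Rightarrow> (nat \<Rightarrow> nat \<Rightarrow> real) \<Rightarrow> (nat \<times> nat) set" where
  "edges n M = {(j, i). i \<in> {1..n} \<and> j \<in> {1..n} \<and> M i j > 0}"

definition avg :: "nat \<Rightarrow> (nat \<Rightarrow> real) \<Rightarrow> real" where
  "avg n x = (\<Sum>i=1..n. x i) / real n"

definition Vfun :: "nat \<Rightarrow> (nat \<Rightarrow> real) \<Rightarrow> real" where
  "Vfun n x = (\<Sum>i=1..n. (x i - avg n x)^2)"

end

theory Submission
  imports Defs
begin

lemma V_alt:
  "Vfun n y = (\<Sum>i=1..n. (y i)^2) - (\<Sum>i=1..n. y i)^2 / real n"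
proof (cases "n = 0")
  case True then show ?thesis by (simp add: Vfun_def)
next
  case False
  define S where "S = (\<Sum>i=1..n. y i)"
  have a: "(\<Sum>i=1..n. 2 * (S / n) * y i) = 2*(S/n)*S"
    unfolding S_def by (rule sum_distrib_left[symmetric])
  have b: "(\<Sum>i=1..n. (S/n)^2) = n*(S/n)^2" by simp
  have "Vfun n y = (\<Sum>i=1..n. (y i)^2 - 2 * (S / n) * y i + (S/n)^2)"
    unfolding Vfun_def avg_def S_def[symmetric] by (rule sum.cong) (auto simp: power2_diff)
  also have "\<dots> = (\<Sum>i=1..n. (y i)^2) - (\<Sum>i=1..n. 2 * (S / n) * y i) + (\<Sum>i=1..n. (S/n)^2)"
    by (simp only: sum.distrib sum_subtractf)
  also have "\<dots> = (\<Sum>i=1..n. (y i)^2) - 2*(S/n)*S + n*(S/n)^2" by (simp only: a b)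
  also have "\<dots> = (\<Sum>i=1..n. (y i)^2) - S^2/n" using False by (simp add: field_simps power2_eq_square)
  finally show ?thesis by (simp add: S_def)
qed

lemma step_dec:
  assumes ds: "doubly_stochastic n M"
    and y': "\<And>l. l \<in> {1..n} \<Longrightarrow> y' l = (\<Sum>j=1..n. M l j * y j)"
  shows "Vfun n y - Vfun n y' = (\<Sum>l=1..n. \<Sum>i=1..n. M l i * (y i - y' l)^2)"
proof -
  have col: "\<And>j. j\<in>{1..n} \<Longrightarrow> (\<Sum>l=1..n. M l j) = 1"
    and row: "\<And>l. l\<in>{1..n} \<Longrightarrow> (\<Sum>i=1..n. M l i) = 1"
    using ds unfolding doubly_stochastic_def by auto
  have s1: "(\<Sum>l=1..n. y' l) = (\<Sum>j=1..n. y j)"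
  proof -
    have "(\<Sum>l=1..n. y' l) = (\<Sum>l=1..n. \<Sum>j=1..n. M l j * y j)" by (rule sum.cong) (auto simp: y')
    also have "\<dots> = (\<Sum>j=1..n. \<Sum>l=1..n. M l j * y j)" by (rule sum.swap)
    also have "\<dots> = (\<Sum>j=1..n. (\<Sum>l=1..n. M l j) * y j)" by (simp add: sum_distrib_right)
    also have "\<dots> = (\<Sum>j=1..n. y j)" by (rule sum.cong[OF refl]) (metis col mult_1)
    finally show ?thesis .
  qed
  have s2: "(\<Sum>l=1..n. \<Sum>i=1..n. M l i * (y i)^2) = (\<Sum>i=1..n. (y i)^2)"
  proof -
    have "(\<Sum>l=1..n. \<Sum>i=1..n. M l i * (y i)^2) = (\<Sum>i=1..n. \<Sum>l=1..n. M l i * (y i)^2)" by (rule sum.swap)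
    also have "\<dots> = (\<Sum>i=1..n. (\<Sum>l=1..n. M l i) * (y i)^2)" by (simp add: sum_distrib_right)
    also have "\<dots> = (\<Sum>i=1..n. (y i)^2)" by (rule sum.cong[OF refl]) (metis col mult_1)
    finally show ?thesis .
  qed
  have rowl: "(\<Sum>i=1..n. M l i * (y i - y' l)^2) = (\<Sum>i=1..n. M l i * (y i)^2) - (y' l)^2"
    if l: "l\<in>{1..n}" for l
  proof -
    have "(\<Sum>i=1..n. M l i * (y i - y' l)^2) = (\<Sum>i=1..n. M l i * (y i)^2 - 2 * y' l * (M l i * y i) + (y' l)^2 * M l i)"
      by (rule sum.cong) (auto simp: power2_diff algebra_simps)
    also have "\<dots> = (\<Sum>i=1..n. M l i * (y i)^2) - 2 * y' l * (\<Sum>i=1..n. M l i * y i) + (y' l)^2 * (\<Sum>i=1..n. M l i)"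
      by (simp add: sum.distrib sum_subtractf sum_distrib_left)
    also have "\<dots> = (\<Sum>i=1..n. M l i * (y i)^2) - (y' l)^2"
      unfolding row[OF l] y'[OF l, symmetric] by (simp add: power2_eq_square)
    finally show ?thesis .
  qed
  have "(\<Sum>l=1..n. \<Sum>i=1..n. M l i * (y i - y' l)^2) = (\<Sum>l=1..n. (\<Sum>i=1..n. M l i * (y i)^2) - (y' l)^2)"
    by (rule sum.cong[OF refl]) (erule rowl)
  also have "\<dots> = (\<Sum>i=1..n. (y i)^2) - (\<Sum>l=1..n. (y' l)^2)"
    by (simp only: sum_subtractf s2)
  finally have X: "(\<Sum>l=1..n. \<Sum>i=1..n. M l i * (y i - y' l)^2) = (\<Sum>i=1..n. (y i)^2) - (\<Sum>l=1..n. (y' l)^2)" .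
  show ?thesis unfolding V_alt s1 X by simp
qed

lemma row_var:
  fixes M :: "nat \<Rightarrow> nat \<Rightarrow> real"
  assumes nn: "\<And>i. i\<in>{1..n} \<Longrightarrow> 0 \<le> M l i"
    and p: "p\<in>{1..n}" and q: "q\<in>{1..n}" and Mp: "\<eta> \<le> M l p" and Mq: "\<eta> \<le> M l q"
    and eta: "0 < \<eta>"
  shows "\<eta>/2 * (y p - y q)^2 \<le> (\<Sum>i=1..n. M l i * (y i - m)^2)"
proof (cases "p = q")
  case True
  have "0 \<le> (\<Sum>i=1..n. M l i * (y i - m)^2)" by (intro sum_nonneg) (auto intro!: mult_nonneg_nonneg nn)
  then show ?thesis using True by simp
next
  case False
  have "(\<Sum>i\<in>{p,q}. M l i * (y i - m)^2) \<le> (\<Sum>i=1..n. M l i * (y i - m)^2)"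
    by (rule sum_mono2) (use p q in \<open>auto intro!: mult_nonneg_nonneg nn\<close>)
  moreover have "(\<Sum>i\<in>{p,q}. M l i * (y i - m)^2) = M l p * (y p - m)^2 + M l q * (y q - m)^2"
    using False by simp
  moreover have "\<eta> * (y p - m)^2 \<le> M l p * (y p - m)^2" using Mp by (simp add: mult_right_mono)
  moreover have "\<eta> * (y q - m)^2 \<le> M l q * (y q - m)^2" using Mq by (simp add: mult_right_mono)
  ultimately have X: "\<eta> * (y p - m)^2 + \<eta> * (y q - m)^2 \<le> (\<Sum>i=1..n. M l i * (y i - m)^2)"
    by linarith
  have E: "\<eta> * (y p - m)^2 + \<eta> * (y q - m)^2 = \<eta>/2 * (y p - y q)^2 + \<eta> * ((y p + y q - 2*m)^2/2)"
    by (simp add: power2_eq_square field_simps)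
  have "0 \<le> \<eta> * ((y p + y q - 2*m)^2/2)" using eta by simp
  then show ?thesis using X E by linarith
qed

lemma sq_sum_ge:
  fixes f :: "nat \<Rightarrow> real"
  assumes "finite F" "\<forall>d\<in>F. 0 \<le> f d"
  shows "(\<Sum>d\<in>F. (f d)^2) \<le> (\<Sum>d\<in>F. f d)^2"
  using assms
proof (induction F rule: finite_induct)
  case empty then show ?case by simp
next
  case (insert a F)
  have s: "0 \<le> (\<Sum>d\<in>F. f d)" using insert by (auto intro: sum_nonneg)
  have "0 \<le> f a" using insert by auto
  then have "0 \<le> 2 * f a * (\<Sum>d\<in>F. f d)" using s by simp
  then show ?case using insert by (simp add: power2_sum)
qed

lemma inv_ge:
  fixes A :: "nat \<Rightarrow> nat \<Rightarrow> nat \<Rightarrow> real" and x :: "nat \<Rightarrow> nat \<Rightarrow> real"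
  assumes dyn: "\<And>k i. i \<in> {1..n} \<Longrightarrow> x (Suc k) i = (\<Sum>j=1..n. A k i j * x k j)"
    and ds: "\<And>k. doubly_stochastic n (A k)"
    and S: "S \<subseteq> {1..n}"
    and init: "\<forall>i\<in>S. c \<le> x t0 i"
    and zero: "\<And>s i j. t0 \<le> s \<Longrightarrow> s < t0 + m \<Longrightarrow> i\<in>S \<Longrightarrow> j\<in>{1..n} \<Longrightarrow> j\<notin>S \<Longrightarrow> A s i j = 0"
  shows "\<forall>i\<in>S. c \<le> x (t0+m) i"
  using zero
proof (induction m)
  case 0 then show ?case using init by simp
next
  case (Suc m)
  have IH: "\<forall>i\<in>S. c \<le> x (t0+m) i" using Suc by simp
  show ?case
  proof
    fix i assume i: "i\<in>S"
    then have iN: "i\<in>{1..n}" using S by blast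
    have nn: "\<And>j. j\<in>{1..n} \<Longrightarrow> 0 \<le> A (t0+m) i j" using ds iN unfolding doubly_stochastic_def by blast
    have rs: "(\<Sum>j=1..n. A (t0+m) i j) = 1" using ds iN unfolding doubly_stochastic_def by blast
    have "(\<Sum>j=1..n. A (t0+m) i j * c) \<le> (\<Sum>j=1..n. A (t0+m) i j * x (t0+m) j)"
    proof (rule sum_mono)
      fix j assume j: "j\<in>{1..n}"
      show "A (t0+m) i j * c \<le> A (t0+m) i j * x (t0+m) j"
      proof (cases "j\<in>S")
        case True then show ?thesis using IH nn[OF j] by (simp add: mult_left_mono)
      next
        case False then have "A (t0+m) i j = 0" using Suc.prems[of "t0+m" i j] i j by simp
        then show ?thesis by simp
      qed
    qed
    then show "c \<le> x (t0 + Suc m) i" using dyn[OF iN, of "t0+m"] rs by (simp add: sum_distrib_right[symmetric])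
  qed
qed

lemma inv_le:
  fixes A :: "nat \<Rightarrow> nat \<Rightarrow> nat \<Rightarrow> real" and x :: "nat \<Rightarrow> nat \<Rightarrow> real"
  assumes dyn: "\<And>k i. i \<in> {1..n} \<Longrightarrow> x (Suc k) i = (\<Sum>j=1..n. A k i j * x k j)"
    and ds: "\<And>k. doubly_stochastic n (A k)"
    and S: "S \<subseteq> {1..n}"
    and init: "\<forall>i\<in>S. x t0 i \<le> c"
    and zero: "\<And>s i j. t0 \<le> s \<Longrightarrow> s < t0 + m \<Longrightarrow> i\<in>S \<Longrightarrow> j\<in>{1..n} \<Longrightarrow> j\<notin>S \<Longrightarrow> A s i j = 0"
  shows "\<forall>i\<in>S. x (t0+m) i \<le> c"
proof -
  have "\<forall>i\<in>S. - c \<le> (\<lambda>k i. - x k i) (t0+m) i"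
    by (rule inv_ge[where A=A and n=n, OF _ ds S _ zero]) (use dyn init in \<open>auto simp: sum_negf[symmetric]\<close>)
  then show ?thesis by simp
qed



lemma core:
  fixes n B :: nat and \<eta> :: real
    and A :: "nat \<Rightarrow> nat \<Rightarrow> nat \<Rightarrow> real"
    and x :: "nat \<Rightarrow> nat \<Rightarrow> real"
  assumes eta_pos: "\<eta> > 0"
    and B_ge: "B \<ge> 1"
    and dyn: "\<And>k i. i \<in> {1..n} \<Longrightarrow> x (Suc k) i = (\<Sum>j=1..n. A k i j * x k j)"
    and ds: "\<And>k. doubly_stochastic n (A k)"
    and diag: "\<And>k i. i \<in> {1..n} \<Longrightarrow> A k i i > 0"
    and lowb: "\<And>k i j. i \<in> {1..n} \<Longrightarrow> j \<in> {1..n} \<Longrightarrow> A k i j > 0 \<Longrightarrow> A k i j \<ge> \<eta>"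
    and conn: "\<And>k \<sigma> d. \<sigma> permutes {1..n} \<Longrightarrow>
        (\<forall>a\<in>{1..<n}. x (k*B) (\<sigma> a) \<ge> x (k*B) (\<sigma> (Suc a))) \<Longrightarrow>
        d \<in> {1..n-1} \<Longrightarrow>
        x (k*B) (\<sigma> d) = x (k*B) (\<sigma> (Suc d)) \<or>
        (\<exists>t\<in>{k*B..(k+1)*B-1}. \<exists>i\<in>\<sigma> ` {1..d}. \<exists>j\<in>\<sigma> ` {d+1..n}.
            (i, j) \<in> edges n (A t) \<or> (j, i) \<in> edges n (A t))"
    and perm: "\<sigma> permutes {1..n}"
    and sorted: "\<forall>a\<in>{1..<n}. x (k*B) (\<sigma> a) \<ge> x (k*B) (\<sigma> (Suc a))"
  shows "Vfun n (x (k*B)) - Vfun n (x ((k+1)*B))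
          \<ge> \<eta> / 2 * (\<Sum>i=1..n-1. (x (k*B) (\<sigma> i) - x (k*B) (\<sigma> (Suc i)))^2)"
proof -
  define t0 where "t0 = k*B"
  have tB: "(k+1)*B = t0 + B" by (simp add: t0_def)
  define z where "z a = x t0 (\<sigma> a)" for a
  define \<delta> where "\<delta> d = z d - z (Suc d)" for d
  have nnA: "\<And>s i j. i\<in>{1..n} \<Longrightarrow> j\<in>{1..n} \<Longrightarrow> 0 \<le> A s i j"
    using ds unfolding doubly_stochastic_def by blast
  define var where "var t l = (\<Sum>i=1..n. A t l i * (x t i - x (Suc t) l)^2)" for t l
  have var_nn: "0 \<le> var t l" if "l \<in> {1..n}" for t l
    using that unfolding var_def by (intro sum_nonneg) (auto intro!: mult_nonneg_nonneg nnA)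
  have dec: "Vfun n (x t) - Vfun n (x (Suc t)) = (\<Sum>l=1..n. var t l)" for t
    unfolding var_def by (rule step_dec[OF ds]) (rule dyn)
  define \<Omega> where "\<Omega> = {t0..<t0+B} \<times> {1..n}"
  have total: "Vfun n (x t0) - Vfun n (x ((k+1)*B)) = (\<Sum>\<tau>\<in>\<Omega>. var (fst \<tau>) (snd \<tau>))"
  proof -
    have "(\<Sum>t=t0..<t0+B. Vfun n (x (Suc t)) - Vfun n (x t)) = Vfun n (x (t0+B)) - Vfun n (x t0)"
      by (rule sum_Suc_diff') simp
    hence "Vfun n (x t0) - Vfun n (x ((k+1)*B)) = (\<Sum>t=t0..<t0+B. Vfun n (x t) - Vfun n (x (Suc t)))"
      unfolding tB by (simp add: sum_subtractf)
    also have "\<dots> = (\<Sum>t=t0..<t0+B. \<Sum>l=1..n. var t l)" using dec by simp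
    also have "\<dots> = (\<Sum>(t,l)\<in>\<Omega>. var t l)" unfolding \<Omega>_def by (rule sum.cartesian_product)
    also have "\<dots> = (\<Sum>\<tau>\<in>\<Omega>. var (fst \<tau>) (snd \<tau>))" by (rule sum.cong) auto
    finally show ?thesis .
  qed
  have chain: "z b \<le> z a" if a1: "1 \<le> a" and ab: "a \<le> b" and bn: "b \<le> n" for a b
    using ab bn
  proof (induction b)
    case 0 then show ?case by simp
  next
    case (Suc b)
    show ?case
    proof (cases "a = Suc b")
      case True then show ?thesis by simp
    next
      case False
      then have "a \<le> b" using Suc.prems by simp
      then have "z b \<le> z a" using Suc by simp
      moreover have "z (Suc b) \<le> z b" using sorted \<open>a \<le> b\<close> a1 Suc.prems unfolding z_def t0_def by auto
      ultimately show ?thesis by simp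
    qed
  qed
  have \<delta>nn: "0 \<le> \<delta> d" if "d \<in> {1..n-1}" for d
  proof -
    have "d \<in> {1..<n}" using that by auto
    then show ?thesis using sorted unfolding \<delta>_def z_def t0_def by auto
  qed
  have imgS: "\<sigma> ` {1..n} = {1..n}" using perm by (rule permutes_image)
  define D where "D = {d\<in>{1..n-1}. \<delta> d \<noteq> 0}"
  define good where "good d w \<longleftrightarrow> (case w of (t,l,p,q) \<Rightarrow> t\<in>{t0..<t0+B} \<and> l\<in>{1..n} \<and> p\<in>{1..n} \<and> q\<in>{1..n}
     \<and> \<eta> \<le> A t l p \<and> \<eta> \<le> A t l q \<and> z d \<le> x t p \<and> x t q \<le> z (Suc d))" for d w
  have ex: "\<forall>d\<in>D. \<exists>w. good d w"
  proof
    fix d assume dD: "d\<in>D"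
    then have d1: "1 \<le> d" and dn: "d < n" and dne: "\<delta> d \<noteq> 0" and dI: "d \<in> {1..n-1}"
      unfolding D_def by auto
    define T where "T = \<sigma> ` {1..d}"
    define Bd where "Bd = \<sigma> ` {d+1..n}"
    have "T \<subseteq> \<sigma> ` {1..n}" unfolding T_def by (rule image_mono) (use dn in auto)
    then have TS: "T \<subseteq> {1..n}" using imgS by simp
    have "Bd \<subseteq> \<sigma> ` {1..n}" unfolding Bd_def by (rule image_mono) auto
    then have BS: "Bd \<subseteq> {1..n}" using imgS by simp
    have compT: "j \<in> Bd" if j: "j\<in>{1..n}" "j\<notin>T" for j
    proof -
      have "j \<in> \<sigma> ` {1..n}" using imgS j by simp
      then obtain a where a: "a\<in>{1..n}" "j = \<sigma> a" by blast
      then have "a\<notin>{1..d}" using j(2) unfolding T_def by auto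
      then show "j\<in>Bd" using a unfolding Bd_def by auto
    qed
    have compB: "j \<in> T" if j: "j\<in>{1..n}" "j\<notin>Bd" for j
    proof -
      have "j \<in> \<sigma> ` {1..n}" using imgS j by simp
      then obtain a where a: "a\<in>{1..n}" "j = \<sigma> a" by blast
      then have "a\<notin>{d+1..n}" using j(2) unfolding Bd_def by auto
      then show "j\<in>T" using a unfolding T_def by auto
    qed
    define cross where "cross s \<longleftrightarrow> (\<exists>i\<in>T. \<exists>j\<in>Bd. (i,j) \<in> edges n (A s) \<or> (j,i) \<in> edges n (A s))" for s
    have "x (k*B) (\<sigma> d) \<noteq> x (k*B) (\<sigma> (Suc d))" using dne unfolding \<delta>_def z_def t0_def by simp
    then obtain t where t: "t\<in>{k*B..(k+1)*B-1}" "cross t"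
      using conn[OF perm sorted dI] unfolding cross_def T_def Bd_def by blast
    define tm where "tm = (LEAST s. t0 \<le> s \<and> cross s)"
    have tm1: "t0 \<le> tm \<and> cross tm" unfolding tm_def by (rule LeastI[of _ t]) (use t in \<open>auto simp: t0_def\<close>)
    have tm2: "tm \<le> t" unfolding tm_def by (rule Least_le) (use t in \<open>auto simp: t0_def\<close>)
    have tmB: "tm < t0 + B" using tm2 t B_ge tB by auto
    have nocross: "\<not> cross s" if "t0 \<le> s" "s < tm" for s
      using not_less_Least[of s "\<lambda>s. t0 \<le> s \<and> cross s"] that unfolding tm_def by blast
    have zero1: "A s i j = 0" if s: "t0 \<le> s" "s < t0 + (tm - t0)" and i: "i\<in>T" and j: "j\<in>{1..n}" "j\<notin>T" for s i j
    proof -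
      have jB: "j\<in>Bd" using compT j by blast
      have "\<not> cross s" using nocross s tm1 by auto
      then have "(j,i) \<notin> edges n (A s)" using i jB unfolding cross_def by blast
      moreover have iN: "i\<in>{1..n}" using i TS by blast
      ultimately have "\<not> A s i j > 0" using j unfolding edges_def by auto
      then show "A s i j = 0" using nnA[of i j s] iN j(1) by linarith
    qed
    have zero2: "A s i j = 0" if s: "t0 \<le> s" "s < t0 + (tm - t0)" and i: "i\<in>Bd" and j: "j\<in>{1..n}" "j\<notin>Bd" for s i j
    proof -
      have jT: "j\<in>T" using compB j by blast
      have "\<not> cross s" using nocross s tm1 by auto
      then have "(j,i) \<notin> edges n (A s)" using i jT unfolding cross_def by blast
      moreover have iN: "i\<in>{1..n}" using i BS by blast
      ultimately have "\<not> A s i j > 0" using j unfolding edges_def by auto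
      then show "A s i j = 0" using nnA[of i j s] iN j(1) by linarith
    qed
    have initT: "\<forall>i\<in>T. z d \<le> x t0 i"
    proof
      fix i assume "i\<in>T"
      then obtain a where a: "a\<in>{1..d}" "i = \<sigma> a" unfolding T_def by blast
      then have "z d \<le> z a" using chain[of a d] dn by auto
      then show "z d \<le> x t0 i" using a unfolding z_def by simp
    qed
    have initB: "\<forall>i\<in>Bd. x t0 i \<le> z (Suc d)"
    proof
      fix i assume "i\<in>Bd"
      then obtain a where a: "a\<in>{d+1..n}" "i = \<sigma> a" unfolding Bd_def by blast
      then have "z a \<le> z (Suc d)" using chain[of "Suc d" a] by auto
      then show "x t0 i \<le> z (Suc d)" using a unfolding z_def by simp
    qed
    have invT: "\<forall>i\<in>T. z d \<le> x (t0 + (tm - t0)) i"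
      by (rule inv_ge[OF dyn ds TS initT zero1])
    have invB: "\<forall>i\<in>Bd. x (t0 + (tm - t0)) i \<le> z (Suc d)"
      by (rule inv_le[OF dyn ds BS initB zero2])
    have tmeq: "t0 + (tm - t0) = tm" using tm1 by simp
    from tm1 obtain i j where ij: "i\<in>T" "j\<in>Bd" "(i,j) \<in> edges n (A tm) \<or> (j,i) \<in> edges n (A tm)"
      unfolding cross_def by blast
    have iN: "i\<in>{1..n}" using ij TS by blast
    have jN: "j\<in>{1..n}" using ij BS by blast
    have xi: "z d \<le> x tm i" using invT ij tmeq by auto
    have xj: "x tm j \<le> z (Suc d)" using invB ij tmeq by auto
    have tmI: "tm \<in> {t0..<t0+B}" using tm1 tmB by auto
    show "\<exists>w. good d w"
    proof (cases "(i,j) \<in> edges n (A tm)")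
      case True
      then have "A tm j i > 0" unfolding edges_def by auto
      then have "\<eta> \<le> A tm j i" using lowb iN jN by blast
      moreover have "\<eta> \<le> A tm j j" using lowb diag jN by blast
      ultimately have "good d (tm, j, i, j)" unfolding good_def using tmI iN jN xi xj by auto
      then show ?thesis by blast
    next
      case False
      then have "(j,i) \<in> edges n (A tm)" using ij by blast
      then have "A tm i j > 0" unfolding edges_def by auto
      then have "\<eta> \<le> A tm i j" using lowb iN jN by blast
      moreover have "\<eta> \<le> A tm i i" using lowb diag iN by blast
      ultimately have "good d (tm, i, i, j)" unfolding good_def using tmI iN jN xi xj by auto
      then show ?thesis by blast
    qed
  qed
  then obtain f where f: "\<forall>d\<in>D. good d (f d)" using bchoice by blast
  define g where "g d = (fst (f d), fst (snd (f d)))" for d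
  define pp where "pp d = fst (snd (snd (f d)))" for d
  define qq where "qq d = snd (snd (snd (f d)))" for d
  have fprop: "fst (g d) \<in> {t0..<t0+B} \<and> snd (g d) \<in> {1..n} \<and> pp d \<in>{1..n} \<and> qq d \<in> {1..n}
     \<and> \<eta> \<le> A (fst (g d)) (snd (g d)) (pp d) \<and> \<eta> \<le> A (fst (g d)) (snd (g d)) (qq d)
     \<and> z d \<le> x (fst (g d)) (pp d) \<and> x (fst (g d)) (qq d) \<le> z (Suc d)" if dD: "d\<in>D" for d
  proof -
    obtain a b c e where fd: "f d = (a,b,c,e)" by (cases "f d") auto
    have "good d (f d)" using f dD by blast
    then show ?thesis unfolding fd good_def g_def pp_def qq_def by simp
  qed
  have IO: "g ` D \<subseteq> \<Omega>"
  proof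
    fix \<tau> assume "\<tau> \<in> g ` D"
    then obtain d where d: "d\<in>D" "\<tau> = g d" by blast
    then show "\<tau> \<in> \<Omega>" using fprop[OF d(1)] unfolding \<Omega>_def by (cases "g d") auto
  qed
  have finD: "finite D" unfolding D_def by simp
  have finO: "finite \<Omega>" unfolding \<Omega>_def by simp
  have fiber: "\<eta>/2 * (\<Sum>d\<in>{d\<in>D. g d = \<tau>}. (\<delta> d)^2) \<le> var (fst \<tau>) (snd \<tau>)" if \<tau>I: "\<tau> \<in> g ` D" for \<tau>
  proof -
    obtain d0 where d0: "d0\<in>D" "g d0 = \<tau>" using \<tau>I by blast
    define F where "F = {d\<in>D. g d = \<tau>}"
    have finF: "finite F" unfolding F_def using finD by simp
    have neF: "F \<noteq> {}" using d0 unfolding F_def by blast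
    define d1 where "d1 = Min F"
    define d2 where "d2 = Max F"
    have d1F: "d1 \<in> F" unfolding d1_def using finF neF by (rule Min_in)
    have d2F: "d2 \<in> F" unfolding d2_def using finF neF by (rule Max_in)
    have Fsub: "F \<subseteq> {d1..d2}" unfolding d1_def d2_def using finF by auto
    have d12: "d1 \<le> d2" using d1F Fsub by auto
    have FD: "F \<subseteq> D" unfolding F_def by blast
    obtain t l where tl: "\<tau> = (t,l)" by (cases \<tau>)
    have g1: "g d1 = (t,l)" and g2: "g d2 = (t,l)" using d1F d2F tl unfolding F_def by auto
    have d1D: "d1 \<in> D" and d2D: "d2 \<in> D" using d1F d2F FD by auto
    note h1 = fprop[OF d1D, unfolded g1 fst_conv snd_conv]
    note h2 = fprop[OF d2D, unfolded g2 fst_conv snd_conv]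
    have rv: "\<eta>/2 * (x t (pp d1) - x t (qq d2))^2 \<le> var t l"
      unfolding var_def by (rule row_var) (use h1 h2 eta_pos nnA in auto)
    have d1ge: "1 \<le> d1" and d2le: "d2 \<le> n-1" using d1D d2D unfolding D_def by auto
    have "(\<Sum>d=d1..d2. z (Suc d) - z d) = z (Suc d2) - z d1" by (rule sum_Suc_diff) (use d12 in simp)
    then have tele: "(\<Sum>d=d1..d2. \<delta> d) = z d1 - z (Suc d2)"
      unfolding \<delta>_def by (simp add: sum_subtractf)
    have "(\<Sum>d\<in>F. \<delta> d) \<le> (\<Sum>d=d1..d2. \<delta> d)"
      by (rule sum_mono2) (use Fsub d1ge d2le \<delta>nn in auto)
    have Fnn: "0 \<le> (\<Sum>d\<in>F. \<delta> d)" using FD \<delta>nn unfolding D_def by (intro sum_nonneg) auto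
    have G: "(\<Sum>d\<in>F. \<delta> d) \<le> x t (pp d1) - x t (qq d2)"
      using \<open>(\<Sum>d\<in>F. \<delta> d) \<le> (\<Sum>d=d1..d2. \<delta> d)\<close> tele h1 h2 by linarith
    have sq1: "(\<Sum>d\<in>F. (\<delta> d)^2) \<le> (\<Sum>d\<in>F. \<delta> d)^2"
      by (rule sq_sum_ge) (use finF FD \<delta>nn in \<open>auto simp: D_def\<close>)
    have sq2: "(\<Sum>d\<in>F. \<delta> d)^2 \<le> (x t (pp d1) - x t (qq d2))^2"
      by (rule power_mono) (use Fnn G in auto)
    have "\<eta>/2 * (\<Sum>d\<in>F. (\<delta> d)^2) \<le> \<eta>/2 * (x t (pp d1) - x t (qq d2))^2"
      using sq1 sq2 eta_pos by (intro mult_left_mono) auto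
    then show ?thesis using rv tl unfolding F_def by simp
  qed
  have "\<eta>/2 * (\<Sum>i=1..n-1. (\<delta> i)^2) = \<eta>/2 * (\<Sum>d\<in>D. (\<delta> d)^2)"
    by (subst sum.mono_neutral_left[of "{1..n-1}" D]) (auto simp: D_def)
  also have "\<dots> = \<eta>/2 * (\<Sum>\<tau>\<in>g`D. \<Sum>d\<in>{d\<in>D. g d = \<tau>}. (\<delta> d)^2)"
    by (subst sum.group[OF finD _ subset_refl]) (use finD in auto)
  also have "\<dots> = (\<Sum>\<tau>\<in>g`D. \<eta>/2 * (\<Sum>d\<in>{d\<in>D. g d = \<tau>}. (\<delta> d)^2))"
    by (rule sum_distrib_left)
  also have "\<dots> \<le> (\<Sum>\<tau>\<in>g`D. var (fst \<tau>) (snd \<tau>))"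
    by (rule sum_mono) (rule fiber)
  also have "\<dots> \<le> (\<Sum>\<tau>\<in>\<Omega>. var (fst \<tau>) (snd \<tau>))"
    by (rule sum_mono2[OF finO IO]) (auto simp: \<Omega>_def intro!: var_nn)
  also have "\<dots> = Vfun n (x t0) - Vfun n (x ((k+1)*B))" using total by simp
  finally show ?thesis unfolding \<delta>_def z_def t0_def .
qed

theorem lemma4:
  fixes n B :: nat and \<eta> :: real
    and A :: "nat \<Rightarrow> nat \<Rightarrow> nat \<Rightarrow> real"
    and x :: "nat \<Rightarrow> nat \<Rightarrow> real"
  assumes eta_pos: "\<eta> > 0"
    and B_ge: "B \<ge> 1"
    and dyn: "\<And>k i. i \<in> {1..n} \<Longrightarrow> x (Suc k) i = (\<Sum>j=1..n. A k i j * x k j)"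
    and ds: "\<And>k. doubly_stochastic n (A k)"
    and diag: "\<And>k i. i \<in> {1..n} \<Longrightarrow> A k i i > 0"
    and lowb: "\<And>k i j. i \<in> {1..n} \<Longrightarrow> j \<in> {1..n} \<Longrightarrow> A k i j > 0 \<Longrightarrow> A k i j \<ge> \<eta>"
    and conn: "\<And>k \<sigma> d. \<sigma> permutes {1..n} \<Longrightarrow>
        (\<forall>a\<in>{1..<n}. x (k*B) (\<sigma> a) \<ge> x (k*B) (\<sigma> (Suc a))) \<Longrightarrow>
        d \<in> {1..n-1} \<Longrightarrow>
        x (k*B) (\<sigma> d) = x (k*B) (\<sigma> (Suc d)) \<or>
        (\<exists>t\<in>{k*B..(k+1)*B-1}. \<exists>i\<in>\<sigma> ` {1..d}. \<exists>j\<in>\<sigma> ` {d+1..n}.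
            (i, j) \<in> edges n (A t) \<or> (j, i) \<in> edges n (A t))"
  shows "\<And>k \<sigma>. \<sigma> permutes {1..n} \<Longrightarrow>
        (\<forall>a\<in>{1..<n}. x (k*B) (\<sigma> a) \<ge> x (k*B) (\<sigma> (Suc a))) \<Longrightarrow>
        Vfun n (x (k*B)) - Vfun n (x ((k+1)*B))
          \<ge> \<eta> / 2 * (\<Sum>i=1..n-1. (x (k*B) (\<sigma> i) - x (k*B) (\<sigma> (Suc i)))^2)"
proof -
  fix k \<sigma>
  assume p: "\<sigma> permutes {1..n}" and s: "\<forall>a\<in>{1..<n}. x (k*B) (\<sigma> a) \<ge> x (k*B) (\<sigma> (Suc a))"
  show "Vfun n (x (k*B)) - Vfun n (x ((k+1)*B))
          \<ge> \<eta> / 2 * (\<Sum>i=1..n-1. (x (k*B) (\<sigma> i) - x (k*B) (\<sigma> (Suc i)))^2)"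
    by (rule core[OF eta_pos B_ge dyn ds diag lowb conn p s])
qed

end
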